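(* Let $\mathbb G=V_1\times V_2$ be a step-two Carnot group of Métivier's type, i.e. for every $x\in V_1\setminus\{0\}$ the map $x'\in V_1\mapsto[x,x']\in V_2$ is surjective. Then $\mathcal A_h(\mathbb G)=\mathcal A(V_1\times V_2)$.
   Context: A step-two Carnot group is $\mathbb G=V_1\times V_2$ ($V_1,V_2$ finite-dimensional real vector spaces, $V_2\ne\{0\}$) with a bilinear skew-symmetric $[\cdot,\cdot]:V_1\times V_1\to V_2$ whose image spans $V_2$, and group law $(x,z)\cdot(x',z')=(x+x',z+z'+[x,x'])$. $\mathcal A_h(\mathbb G)$ is the space of maps $f:\mathbb G\to\mathbb R$ such that for all $(x,z)\in\mathbb G$, $y\in V_1$, $t\mapsto f((x,z)\cdot(ty,0))$ is affine; $\mathcal A(V_1\times V_2)$ is the space of maps affine in the usual sense on $V_1\times V_2$. *)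

theory Defs
  imports "HOL-Analysis.Analysis"
begin

definition carnot_mult ::
  "('a::real_vector \<Rightarrow> 'a \<Rightarrow> 'b::real_vector) \<Rightarrow> 'a \<times> 'b \<Rightarrow> 'a \<times> 'b \<Rightarrow> 'a \<times> 'b" where
  "carnot_mult br p q = (fst p + fst q, snd p + snd q + br (fst p) (fst q))"

text \<open>Structure assumptions of a step-two Carnot group (V2 nontrivial is automatic
  for a euclidean_space type).\<close>
definition step_two_bracket ::
  "('a::euclidean_space \<Rightarrow> 'a \<Rightarrow> 'b::euclidean_space) \<Rightarrow> bool" where
  "step_two_bracket br \<longleftrightarrow> bilinear br \<and> (\<forall>x y. br x y = - br y x)
     \<and> span (range (\<lambda>(x, y). br x y)) = UNIV"

definition metivier_type :: "('a::euclidean_space \<Rightarrow> 'a \<Rightarrow> 'b::euclidean_space) \<Rightarrow> bool" where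
  "metivier_type br \<longleftrightarrow> (\<forall>x. x \<noteq> 0 \<longrightarrow> surj (br x))"

definition horiz_affine ::
  "('a::euclidean_space \<Rightarrow> 'a \<Rightarrow> 'b::euclidean_space) \<Rightarrow> ('a \<times> 'b \<Rightarrow> real) set" where
  "horiz_affine br = {f. \<forall>p y. \<exists>a b. \<forall>t::real.
      f (carnot_mult br p (t *\<^sub>R y, 0)) = a * t + b}"

definition affine_maps :: "('v::real_vector \<Rightarrow> real) set" where
  "affine_maps = {f. \<exists>l c. linear l \<and> (\<forall>v. f v = l v + c)}"

end

theory Submission
  imports Defs
begin

definition aff1 :: "(real \<Rightarrow> real) \<Rightarrow> bool" where
  "aff1 \<phi> \<longleftrightarrow> (\<exists>a b. \<forall>t. \<phi> t = a * t + b)"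

lemma aff1_eval: "aff1 \<phi> \<Longrightarrow> \<phi> t = \<phi> 0 + t * (\<phi> 1 - \<phi> 0)"
  unfolding aff1_def by (auto simp: algebra_simps)

lemma aff1_mid: "aff1 \<phi> \<Longrightarrow> \<phi> 1 + \<phi> (-1) = 2 * \<phi> 0"
  unfolding aff1_def by auto

lemma aff1_diff: "aff1 \<phi> \<Longrightarrow> aff1 \<psi> \<Longrightarrow> aff1 (\<lambda>t. \<phi> t - \<psi> t)"
  unfolding aff1_def
  by (clarify, rule_tac x="a - aa" in exI, rule_tac x="b - ba" in exI) (simp add: algebra_simps)

lemma aff1_add: "aff1 \<phi> \<Longrightarrow> aff1 \<psi> \<Longrightarrow> aff1 (\<lambda>t. \<phi> t + \<psi> t)"
  unfolding aff1_def
  by (clarify, rule_tac x="a + aa" in exI, rule_tac x="b + ba" in exI) (simp add: algebra_simps)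

lemma aff1_scale: "aff1 \<phi> \<Longrightarrow> aff1 (\<lambda>t. c * \<phi> t)"
  unfolding aff1_def
  by (clarify, rule_tac x="c * a" in exI, rule_tac x="c * b" in exI) (simp add: algebra_simps)

lemma aff1_lin: "aff1 (\<lambda>t. c * t)"
  unfolding aff1_def by (rule exI[of _ c], rule exI[of _ 0]) simp

lemma aff1_cong: "aff1 \<phi> \<Longrightarrow> (\<And>t. \<phi> t = \<psi> t) \<Longrightarrow> aff1 \<psi>"
  unfolding aff1_def by metis

lemma lines_linear:
  fixes g :: "'v::real_vector \<Rightarrow> real"
  assumes A: "\<And>p v. aff1 (\<lambda>t. g (p + t *\<^sub>R v))"
  shows "linear (\<lambda>v. g v - g 0)"
proof -
  have sc: "g (t *\<^sub>R v) = g 0 + t * (g v - g 0)" for t v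
    using aff1_eval[OF A[of 0 v], of t] by simp
  have ad: "g (u + v) - g 0 = (g u - g 0) + (g v - g 0)" for u v
  proof -
    have "g (u + (1/2) *\<^sub>R (v - u)) = g u + (1/2) * (g v - g u)"
      using aff1_eval[OF A[of u "v - u"], of "1/2"] by simp
    moreover have "u + (1/2) *\<^sub>R (v - u) = (1/2) *\<^sub>R (u + v)"
    proof -
      have h: "(1/2::real) + 1/2 = 1" by simp
      have "u = (1/2) *\<^sub>R u + (1/2) *\<^sub>R u" by (metis h scaleR_add_left scaleR_one)
      then show ?thesis by (simp add: algebra_simps)
    qed
    ultimately have "g ((1/2) *\<^sub>R (u+v)) = g u + (1/2)*(g v - g u)" by simp
    with sc[of "1/2" "u+v"] show ?thesis by argo
  qed
  show ?thesis
    by (rule linearI) (use ad sc in \<open>auto simp: algebra_simps\<close>)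
qed

theorem proposition6p1:
  fixes br :: "'a::euclidean_space \<Rightarrow> 'a \<Rightarrow> 'b::euclidean_space"
  assumes "step_two_bracket br"
    and "metivier_type br"
  shows "horiz_affine br = (affine_maps :: ('a \<times> 'b \<Rightarrow> real) set)"
proof
  have st: "bilinear br \<and> (\<forall>x y. br x y = - br y x) \<and> span (range (\<lambda>(x, y). br x y)) = UNIV"
    using assms(1) unfolding step_two_bracket_def .
  have bil: "bilinear br" using st by (rule conjunct1)
  have anti: "br x y = - br y x" for x y using st[THEN conjunct2, THEN conjunct1] by (rule spec2)
  note brs = bilinear_ladd[OF bil] bilinear_radd[OF bil] bilinear_lmul[OF bil] bilinear_rmul[OF bil]
    bilinear_lneg[OF bil] bilinear_rneg[OF bil] bilinear_lsub[OF bil] bilinear_rsub[OF bil]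
    bilinear_lzero[OF bil] bilinear_rzero[OF bil]
  have brxx: "br x x = 0" for x
  proof -
    have "br x x + br x x = 0" by (subst (2) anti) simp
    then have "(2::real) *\<^sub>R br x x = 0" by (simp add: scaleR_2)
    then show ?thesis by simp
  qed
  have surjb: "\<exists>u. br u x = w" if "x \<noteq> 0" for x w
  proof -
    from assms(2) that have "surj (br x)" unfolding metivier_type_def by auto
    then obtain u where "br x u = - w" by (metis surjD)
    then show ?thesis using anti[of u x] by auto
  qed
  show "affine_maps \<subseteq> horiz_affine br"
  proof
    fix f :: "'a \<times> 'b \<Rightarrow> real" assume "f \<in> affine_maps"
    then obtain l c where l: "linear l" and fl: "\<And>v. f v = l v + c"
      unfolding affine_maps_def by auto
    show "f \<in> horiz_affine br"
      unfolding horiz_affine_def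
    proof (intro CollectI allI)
      fix p :: "'a \<times> 'b" and y :: 'a
      have eq: "carnot_mult br p (t *\<^sub>R y, 0) = p + t *\<^sub>R (y, br (fst p) y)" for t
        by (cases p) (simp add: carnot_mult_def bilinear_rmul[OF bil])
      have ls: "l (t *\<^sub>R y, t *\<^sub>R br (fst p) y) = t * l (y, br (fst p) y)" for t
        using linear_scale[OF l, of t "(y, br (fst p) y)"] by simp
      show "\<exists>a b. \<forall>t. f (carnot_mult br p (t *\<^sub>R y, 0)) = a * t + b"
        by (rule exI[of _ "l (y, br (fst p) y)"], rule exI[of _ "l p + c"])
          (simp add: eq fl linear_add[OF l] ls)
    qed
  qed
  show "horiz_affine br \<subseteq> affine_maps"
  proof
    fix f :: "'a \<times> 'b \<Rightarrow> real" assume "f \<in> horiz_affine br"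
    have H: "aff1 (\<lambda>t. f (x + t *\<^sub>R y, z + t *\<^sub>R br x y))" for x z y
    proof -
      have "\<forall>p y. \<exists>a b. \<forall>t::real. f (carnot_mult br p (t *\<^sub>R y, 0)) = a * t + b"
        using \<open>f \<in> horiz_affine br\<close> unfolding horiz_affine_def mem_Collect_eq .
      then have "\<exists>a b. \<forall>t::real. f (carnot_mult br (x,z) (t *\<^sub>R y, 0)) = a * t + b"
        by (rule allE[of _ "(x,z)"]) (rule allE[of _ y])
      moreover have "carnot_mult br (x,z) (t *\<^sub>R y,0) = (x + t *\<^sub>R y, z + t *\<^sub>R br x y)" for t
        by (simp add: carnot_mult_def bilinear_rmul[OF bil])
      ultimately show ?thesis unfolding aff1_def by simp
    qed

    obtain e :: 'a where e: "e \<noteq> 0" using nonempty_Basis nonzero_Basis by blast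
    have V: "aff1 (\<lambda>r. f (x, z + r *\<^sub>R w))" for x z w
    proof -
      obtain b where b: "br b e = w" using surjb[OF e] by blast
      have P: "aff1 (\<lambda>r. f ((x + b) + r *\<^sub>R e, (z + br x b) + r *\<^sub>R br (x + b) e))"
        by (rule H)
      have Q: "aff1 (\<lambda>r. f ((x - b) + r *\<^sub>R (- e), (z - br x b) + r *\<^sub>R br (x - b) (- e)))"
        by (rule H)
      have mid: "f (x, z + r *\<^sub>R w) = (f ((x + b) + r *\<^sub>R e, (z + br x b) + r *\<^sub>R br (x + b) e)
          + f ((x - b) + r *\<^sub>R (- e), (z - br x b) + r *\<^sub>R br (x - b) (- e))) / 2" for r
      proof -
        have m: "aff1 (\<lambda>t. f (x + t *\<^sub>R (b + r *\<^sub>R e), (z + r *\<^sub>R w) + t *\<^sub>R br x (b + r *\<^sub>R e)))"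
          by (rule H)
        have e1: "(x + 1 *\<^sub>R (b + r *\<^sub>R e), (z + r *\<^sub>R w) + 1 *\<^sub>R br x (b + r *\<^sub>R e))
            = ((x + b) + r *\<^sub>R e, (z + br x b) + r *\<^sub>R br (x + b) e)"
          by (simp add: brs b algebra_simps)
        have e2: "(x + (-1) *\<^sub>R (b + r *\<^sub>R e), (z + r *\<^sub>R w) + (-1) *\<^sub>R br x (b + r *\<^sub>R e))
            = ((x - b) + r *\<^sub>R (- e), (z - br x b) + r *\<^sub>R br (x - b) (- e))"
          by (simp add: brs b algebra_simps)
        have mm: "f (x + 1 *\<^sub>R (b + r *\<^sub>R e), (z + r *\<^sub>R w) + 1 *\<^sub>R br x (b + r *\<^sub>R e))
            + f (x + (-1) *\<^sub>R (b + r *\<^sub>R e), (z + r *\<^sub>R w) + (-1) *\<^sub>R br x (b + r *\<^sub>R e))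
            = 2 * f (x + 0 *\<^sub>R (b + r *\<^sub>R e), (z + r *\<^sub>R w) + 0 *\<^sub>R br x (b + r *\<^sub>R e))"
          by (rule aff1_mid[OF m])
        have "f ((x + b) + r *\<^sub>R e, (z + br x b) + r *\<^sub>R br (x + b) e)
          + f ((x - b) + r *\<^sub>R (- e), (z - br x b) + r *\<^sub>R br (x - b) (- e)) = 2 * f (x, z + r *\<^sub>R w)"
          using mm unfolding e1 e2 by (simp only: scaleR_zero_left add_0_right)
        then show ?thesis by argo
      qed
      show ?thesis
        by (rule aff1_cong[OF aff1_scale[OF aff1_add[OF P Q], of "1/2"]]) (simp add: mid)
    qed
    have LZ: "linear (\<lambda>z. f (x, z) - f (x, 0))" for x
      by (rule lines_linear[of "\<lambda>z. f (x, z)", simplified]) (rule V)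
    define B where "B x z = f (x, z) - f (x, 0)" for x z
    have Badd: "B x (z + w) = B x z + B x w" for x z w
      using linear_add[OF LZ[of x]] unfolding B_def by simp
    have Bscale: "B x (c *\<^sub>R z) = c * B x z" for x c z
      using linear_scale[OF LZ[of x]] unfolding B_def by simp
    have Bneg: "B x (- z) = - B x z" for x z
      using Bscale[of x "-1" z] by simp
    have BX: "aff1 (\<lambda>r. B (x + r *\<^sub>R y) z)" for x y z
    proof -
      have e: "B (x + r *\<^sub>R y) z = f (x + r *\<^sub>R y, z + r *\<^sub>R br x y) - f (x + r *\<^sub>R y, 0 + r *\<^sub>R br x y)" for r
        using Badd[of "x + r *\<^sub>R y" z "r *\<^sub>R br x y"] unfolding B_def by simp
      show ?thesis
        by (rule aff1_cong[OF aff1_diff[OF H[of x y z] H[of x y 0]]]) (rule e[symmetric])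
    qed
    have LX: "linear (\<lambda>x. B x z - B 0 z)" for z
      by (rule lines_linear[of "\<lambda>x. B x z"]) (rule BX)
    define L where "L x z = B x z - B 0 z" for x z
    have Lxadd: "L (x + y) z = L x z + L y z" for x y z
      using linear_add[OF LX[of z]] unfolding L_def by simp
    have Lxscale: "L (c *\<^sub>R x) z = c * L x z" for x c z
      using linear_scale[OF LX[of z]] unfolding L_def by simp
    have Lxneg: "L (- x) z = - L x z" for x z
      using Lxscale[of "-1" x z] by simp
    have Lxsub: "L (x - y) z = L x z - L y z" for x y z
      using Lxadd[of x "-y" z] Lxneg[of y z] by simp
    have Lzneg: "L x (- z) = - L x z" for x z
      unfolding L_def using Bneg by simp
    have L0: "L 0 z = 0" for z unfolding L_def by simp
    have B00: "B x 0 = 0" for x unfolding B_def by simp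
    have Lz0: "L x 0 = 0" for x unfolding L_def B_def by simp
    have Lzadd: "L x (z + w) = L x z + L x w" for x z w
      unfolding L_def using Badd[of x z w] Badd[of 0 z w] by simp
    define a where "a x = f (x, 0)" for x
    have fsplit: "f (x, z) = a x + B 0 z + L x z" for x z
      unfolding a_def B_def L_def by simp
    have E: "a (x + y) + a (x - y) + 2 * L y (br x y) = 2 * a x" for x y
    proof -
      have "f (x + 1 *\<^sub>R y, 0 + 1 *\<^sub>R br x y) + f (x + (-1) *\<^sub>R y, 0 + (-1) *\<^sub>R br x y)
          = 2 * f (x + 0 *\<^sub>R y, 0 + 0 *\<^sub>R br x y)"
        by (rule aff1_mid[OF H])
      then have "f (x + y, br x y) + f (x - y, - br x y) = 2 * f (x, 0)" by simp
      then show ?thesis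
        unfolding fsplit using Bneg[of 0 "br x y"] Lzneg[of "x - y" "br x y"]
          Lxadd[of x y "br x y"] Lxsub[of x y "br x y"] L0 by (simp add: L0 B00 Lz0)
    qed

    have Add: "a (x + y) = a x + a y - a 0 - (L y (br x y) + L x (br y x))" for x y
    proof -
      have 1: "a (x + y) + a (x - y) + 2 * L y (br x y) = 2 * a x" by (rule E)
      have 2: "a (y + x) + a (y - x) + 2 * L x (br y x) = 2 * a y" by (rule E)
      have 3: "a (0 + (x - y)) + a (0 - (x - y)) + 2 * L (x - y) (br 0 (x - y)) = 2 * a 0" by (rule E)
      have 4: "a (x - y) + a (y - x) = 2 * a 0" using 3 by (simp add: brs Lz0)
      have 5: "a (y + x) = a (x + y)" by (simp add: add.commute)
      show ?thesis using 1 2 4 5 by argo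
    qed
    have LT: "L x (br w x) = 0" for x w
    proof -
      have A1: "a (x + x) = a x + a x - a 0 - (L x (br x x) + L x (br x x))" by (rule Add)
      have A2: "a ((x + x) + w) = a (x + x) + a w - a 0 - (L w (br (x + x) w) + L (x + x) (br w (x + x)))"
        by (rule Add)
      have A3: "a (x + (x + w)) = a x + a (x + w) - a 0 - (L (x + w) (br x (x + w)) + L x (br (x + w) x))"
        by (rule Add)
      have A4: "a (x + w) = a x + a w - a 0 - (L w (br x w) + L x (br w x))" by (rule Add)
      have s0: "L x (br x x) = 0" by (simp add: brxx Lz0)
      have s1: "L w (br (x + x) w) + L (x + x) (br w (x + x)) = 2 * L w (br x w) + 4 * L x (br w x)"
        by (simp add: brs Lxadd Lzadd)
      have s3: "L (x + w) (br x (x + w)) + L x (br (x + w) x) = L w (br x w)"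
        using anti[of x w] by (simp add: brs brxx Lxadd Lzadd Lzneg Lz0)
      have 6: "a ((x + x) + w) = a (x + (x + w))" by (simp add: add.assoc)
      have "3 * L x (br w x) = 0" using A1 A2 A3 A4 s0 s1 s3 6 by argo
      then show ?thesis by simp
    qed
    have Lzero: "L x z = 0" for x z
    proof (cases "x = 0")
      case True then show ?thesis by (simp add: L0)
    next
      case False
      then obtain w where "br w x = z" using surjb by blast
      then show ?thesis using LT by blast
    qed
    have fsplit2: "f (x, z) = a x + B 0 z" for x z using fsplit[of x z] Lzero by simp
    have Aa: "aff1 (\<lambda>r. a (x + r *\<^sub>R y))" for x y
    proof -
      have "f (x + t *\<^sub>R y, 0 + t *\<^sub>R br x y) - B 0 (br x y) * t = a (x + t *\<^sub>R y)" for t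
        by (simp add: fsplit2 Bscale)
      then show ?thesis
        by (rule aff1_cong[OF aff1_diff[OF H[of x y 0] aff1_lin[of "B 0 (br x y)"]]])
    qed
    have la: "linear (\<lambda>x. a x - a 0)" by (rule lines_linear[of a]) (rule Aa)
    have aadd: "a (u + v) = a u + a v - a 0" for u v using linear_add[OF la, of u v] by simp
    have ascale: "a (c *\<^sub>R u) = c * (a u - a 0) + a 0" for c u using linear_scale[OF la, of c u] by simp
    have ll: "linear (\<lambda>p. (a (fst p) - a 0) + B 0 (snd p))"
      by (rule linearI) (simp_all add: aadd ascale Badd Bscale algebra_simps)
    show "f \<in> affine_maps"
      unfolding affine_maps_def
    proof (intro CollectI exI conjI allI)
      show "linear (\<lambda>p. (a (fst p) - a 0) + B 0 (snd p))" by (rule ll)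
      fix v :: "'a \<times> 'b"
      show "f v = (a (fst v) - a 0) + B 0 (snd v) + a 0"
        by (cases v) (simp add: fsplit2)
    qed
  qed
qed

end
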